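(* If $L$ is a finite modular i--lattice, in particular if $L$ is a finite De Morgan algebra, in particular if $L$ is a finite Kleene algebra, then ${\rm Con}_{\mathbb{BI}}(L)$ is a Boolean algebra; in particular its cardinality is a natural power of $2$.
   Context: An i--lattice is a lattice $L$ with a unary operation $'$ such that $a''=a$ and $a\leq b$ implies $b'\leq a'$. A De Morgan algebra is a distributive bounded i--lattice; a Kleene algebra is a De Morgan algebra satisfying $a\wedge a'\leq b\vee b'$ for all $a,b$. ${\rm Con}_{\mathbb{BI}}(L)$ is the lattice of congruences of $L$ with respect to $\vee,\wedge,'$ (and the bounds, which does not change the congruences), i.e. lattice congruences $\theta$ such that $(a,b)\in\theta$ implies $(a',b')\in\theta$. *)

theory Defs
  imports Main
begin

definition i_lattice_inv :: "('a::lattice \<Rightarrow> 'a) \<Rightarrow> bool" where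
  "i_lattice_inv n \<longleftrightarrow> (\<forall>a. n (n a) = a) \<and> (\<forall>a b. a \<le> b \<longrightarrow> n b \<le> n a)"

definition modular_lattice :: "'a::lattice itself \<Rightarrow> bool" where
  "modular_lattice _ \<longleftrightarrow> (\<forall>a b c::'a. a \<le> c \<longrightarrow> sup a (inf b c) = inf (sup a b) c)"

text \<open>Congruences of (L, sup, inf, n): equivalence relations on L compatible with
  sup, inf and the involution n (bounds are constants, adding them changes nothing).\<close>
definition ConBI :: "('a::lattice \<Rightarrow> 'a) \<Rightarrow> ('a \<times> 'a) set set" where
  "ConBI n = {\<theta>. equiv UNIV \<theta> \<and>
     (\<forall>a b c d. (a, b) \<in> \<theta> \<and> (c, d) \<in> \<theta> \<longrightarrow> (sup a c, sup b d) \<in> \<theta> \<and> (inf a c, inf b d) \<in> \<theta>) \<and>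
     (\<forall>a b. (a, b) \<in> \<theta> \<longrightarrow> (n a, n b) \<in> \<theta>)}"

definition is_lub_in :: "'b set set \<Rightarrow> 'b set \<Rightarrow> 'b set \<Rightarrow> 'b set \<Rightarrow> bool" where
  "is_lub_in S x y z \<longleftrightarrow> z \<in> S \<and> x \<subseteq> z \<and> y \<subseteq> z \<and> (\<forall>w\<in>S. x \<subseteq> w \<and> y \<subseteq> w \<longrightarrow> z \<subseteq> w)"

definition is_glb_in :: "'b set set \<Rightarrow> 'b set \<Rightarrow> 'b set \<Rightarrow> 'b set \<Rightarrow> bool" where
  "is_glb_in S x y z \<longleftrightarrow> z \<in> S \<and> z \<subseteq> x \<and> z \<subseteq> y \<and> (\<forall>w\<in>S. w \<subseteq> x \<and> w \<subseteq> y \<longrightarrow> w \<subseteq> z)"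

definition join_in :: "'b set set \<Rightarrow> 'b set \<Rightarrow> 'b set \<Rightarrow> 'b set" where
  "join_in S x y = (THE z. is_lub_in S x y z)"

definition meet_in :: "'b set set \<Rightarrow> 'b set \<Rightarrow> 'b set \<Rightarrow> 'b set" where
  "meet_in S x y = (THE z. is_glb_in S x y z)"

definition boolean_lattice_on :: "'b set set \<Rightarrow> bool" where
  "boolean_lattice_on S \<longleftrightarrow>
     (\<forall>x\<in>S. \<forall>y\<in>S. (\<exists>z. is_lub_in S x y z) \<and> (\<exists>z. is_glb_in S x y z)) \<and>
     (\<exists>bot\<in>S. \<exists>top\<in>S. (\<forall>x\<in>S. bot \<subseteq> x \<and> x \<subseteq> top) \<and>
        (\<forall>x\<in>S. \<exists>y\<in>S. meet_in S x y = bot \<and> join_in S x y = top)) \<and>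
     (\<forall>x\<in>S. \<forall>y\<in>S. \<forall>z\<in>S. meet_in S x (join_in S y z) = join_in S (meet_in S x y) (meet_in S x z))"

end

theory Submission
  imports Defs
begin

lemma boolean_card:
  fixes C :: "'b set set"
  assumes "finite C" "b0 \<in> C" "t0 \<in> C"
    "\<forall>x\<in>C. b0 \<subseteq> x \<and> x \<subseteq> t0"
    "\<forall>x\<in>C. \<forall>y\<in>C. x \<inter> y \<in> C"
    "\<forall>x\<in>C. \<forall>y\<in>C. J x y \<in> C \<and> x \<subseteq> J x y \<and> y \<subseteq> J x y \<and> (\<forall>z\<in>C. x \<subseteq> z \<and> y \<subseteq> z \<longrightarrow> J x y \<subseteq> z)"
    "\<forall>x\<in>C. \<forall>y\<in>C. \<forall>z\<in>C. x \<inter> J y z = J (x\<inter>y) (x\<inter>z)"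
    "\<forall>x\<in>C. \<exists>y\<in>C. x \<inter> y = b0 \<and> J x y = t0"
  shows "\<exists>k. card C = 2^k"
  using assms
proof (induction "card C" arbitrary: C t0 rule: less_induct)
  case less
  note fin = less.prems(1) and b0C = less.prems(2) and t0C = less.prems(3)
    and bnd = less.prems(4) and intC = less.prems(5) and lub = less.prems(6)
    and dist = less.prems(7) and compl = less.prems(8)
  have Jb1: "J e b0 = e" if "e \<in> C" for e
    using lub that b0C bnd by (meson subset_antisym subset_refl)
  have Jb2: "J b0 e = e" if "e \<in> C" for e
    using lub that b0C bnd by (meson subset_antisym subset_refl)
  show ?case
  proof (cases "b0 = t0")
    case True
    then have "C = {b0}" using bnd b0C by auto
    then show ?thesis by (intro exI[of _ 0]) simp
  next
    case False
    have "C - {b0} \<noteq> {}" using False t0C by auto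
    then obtain a where a: "a \<in> C - {b0}" "\<forall>b\<in>C - {b0}. b \<subseteq> a \<longrightarrow> a = b"
      using finite_has_minimal[of "C - {b0}"] fin by auto
    have atom: "y = b0 \<or> y = a" if "y \<in> C" "y \<subseteq> a" for y
      using a that by auto
    have aC: "a \<in> C" using a by simp
    obtain c where c: "c \<in> C" "a \<inter> c = b0" "J a c = t0" using compl aC by blast
    define C' where "C' = {x\<in>C. x \<subseteq> c}"
    have "a \<notin> C'"
    proof
      assume "a \<in> C'"
      then have "a \<subseteq> c" by (simp add: C'_def)
      then have "a = b0" using c by auto
      then show False using a by auto
    qed
    then have "C' \<subset> C" using a unfolding C'_def by auto
    then have lt: "card C' < card C" using fin by (simp add: psubset_card_mono)
    have "\<exists>k. card C' = 2^k"
    proof (rule less.hyps[OF lt, of c])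
      show "finite C'" using fin C'_def by simp
      show "b0 \<in> C'" using b0C bnd c C'_def by auto
      show "c \<in> C'" using c C'_def by auto
      show "\<forall>x\<in>C'. b0 \<subseteq> x \<and> x \<subseteq> c" using bnd C'_def by auto
      show "\<forall>x\<in>C'. \<forall>y\<in>C'. x \<inter> y \<in> C'" using intC C'_def by auto
      show "\<forall>x\<in>C'. \<forall>y\<in>C'. J x y \<in> C' \<and> x \<subseteq> J x y \<and> y \<subseteq> J x y \<and> (\<forall>z\<in>C'. x \<subseteq> z \<and> y \<subseteq> z \<longrightarrow> J x y \<subseteq> z)"
        using lub c unfolding C'_def by auto
      show "\<forall>x\<in>C'. \<forall>y\<in>C'. \<forall>z\<in>C'. x \<inter> J y z = J (x\<inter>y) (x\<inter>z)"
        using dist C'_def by auto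
      show "\<forall>x\<in>C'. \<exists>y\<in>C'. x \<inter> y = b0 \<and> J x y = c"
      proof
        fix x assume x: "x \<in> C'"
        then have xC: "x \<in> C" "x \<subseteq> c" by (auto simp: C'_def)
        obtain y where y: "y \<in> C" "x \<inter> y = b0" "J x y = t0" using compl xC(1) by blast
        have "c \<inter> J x y = J (c \<inter> x) (c \<inter> y)" using dist c(1) xC(1) y(1) by blast
        moreover have "c \<inter> t0 = c" using bnd c by auto
        moreover have "c \<inter> x = x" using xC by auto
        ultimately have "J x (y \<inter> c) = c" using y by (simp add: Int_commute)
        moreover have "y \<inter> c \<in> C'" using intC y c C'_def by auto
        moreover have "x \<inter> (y \<inter> c) = b0" using y(2) xC(2) by auto
        ultimately show "\<exists>y\<in>C'. x \<inter> y = b0 \<and> J x y = c" by blast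
      qed
    qed
    then obtain k where k: "card C' = 2^k" by blast
    have inv1: "J (x \<inter> a) (x \<inter> c) = x" if "x \<in> C" for x
    proof -
      have "x \<inter> J a c = J (x \<inter> a) (x \<inter> c)" using dist that aC c(1) by blast
      moreover have "x \<inter> t0 = x" using bnd that by auto
      ultimately show ?thesis using c by simp
    qed
    have inv2: "(J e y \<inter> a, J e y \<inter> c) = (e, y)" if "(e, y) \<in> {b0, a} \<times> C'" for e y
    proof -
      have e: "e \<in> C" "e = b0 \<or> e = a" and yC: "y \<in> C" "y \<subseteq> c"
        using that aC b0C by (auto simp: C'_def)
      have "a \<inter> J e y = J (a \<inter> e) (a \<inter> y)" using dist aC e(1) yC(1) by blast
      moreover have "a \<inter> e = e" using e bnd aC by auto
      moreover have "a \<inter> y = b0" using yC c bnd by auto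
      ultimately have 1: "J e y \<inter> a = e" using Jb1 e by (simp add: Int_commute)
      have "c \<inter> J e y = J (c \<inter> e) (c \<inter> y)" using dist c(1) e(1) yC(1) by blast
      moreover have "c \<inter> e = b0" using e c bnd b0C by auto
      moreover have "c \<inter> y = y" using yC by auto
      ultimately have 2: "J e y \<inter> c = y" using Jb2 yC by (simp add: Int_commute)
      show ?thesis using 1 2 by simp
    qed
    have bij: "bij_betw (\<lambda>x. (x \<inter> a, x \<inter> c)) C ({b0, a} \<times> C')"
    proof (rule bij_betw_byWitness[where f' = "\<lambda>(e,y). J e y"])
      show "(\<lambda>x. (x \<inter> a, x \<inter> c)) ` C \<subseteq> {b0, a} \<times> C'"
        using atom intC aC c unfolding C'_def by auto
      show "(\<lambda>(e, y). J e y) ` ({b0, a} \<times> C') \<subseteq> C"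
        using lub aC b0C unfolding C'_def by auto
      show "\<forall>x\<in>C. (case (x \<inter> a, x \<inter> c) of (e, y) \<Rightarrow> J e y) = x" using inv1 by simp
      show "\<forall>p\<in>{b0, a} \<times> C'. ((case p of (e, y) \<Rightarrow> J e y) \<inter> a, (case p of (e, y) \<Rightarrow> J e y) \<inter> c) = p"
        using inv2 by auto
    qed
    have "card C = card ({b0, a} \<times> C')" using bij_betw_same_card[OF bij] .
    also have "\<dots> = 2 * card C'" using a by (auto simp: card_cartesian_product card_insert_if)
    finally show ?thesis using k by (intro exI[of _ "Suc k"]) simp
  qed
qed

definition Jn :: "('b\<times>'b) set \<Rightarrow> ('b\<times>'b) set \<Rightarrow> ('b\<times>'b) set" where
  "Jn x y = (x \<union> y)\<^sup>*"

context
  fixes n :: "'a::lattice \<Rightarrow> 'a"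
begin

lemma cb_refl: "\<theta> \<in> ConBI n \<Longrightarrow> (a,a) \<in> \<theta>"
  by (auto simp: ConBI_def equiv_def refl_on_def)
lemma cb_sym: "\<theta> \<in> ConBI n \<Longrightarrow> (a,b) \<in> \<theta> \<Longrightarrow> (b,a) \<in> \<theta>"
  by (auto simp: ConBI_def equiv_def sym_def)
lemma cb_trans: "\<theta> \<in> ConBI n \<Longrightarrow> (a,b) \<in> \<theta> \<Longrightarrow> (b,c) \<in> \<theta> \<Longrightarrow> (a,c) \<in> \<theta>"
  unfolding ConBI_def equiv_def by (auto elim: transE)
lemma cb_sup: "\<theta> \<in> ConBI n \<Longrightarrow> (a,b) \<in> \<theta> \<Longrightarrow> (c,d) \<in> \<theta> \<Longrightarrow> (sup a c, sup b d) \<in> \<theta>"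
  by (auto simp: ConBI_def)
lemma cb_inf: "\<theta> \<in> ConBI n \<Longrightarrow> (a,b) \<in> \<theta> \<Longrightarrow> (c,d) \<in> \<theta> \<Longrightarrow> (inf a c, inf b d) \<in> \<theta>"
  by (auto simp: ConBI_def)
lemma cb_n: "\<theta> \<in> ConBI n \<Longrightarrow> (a,b) \<in> \<theta> \<Longrightarrow> (n a, n b) \<in> \<theta>"
  by (auto simp: ConBI_def)

lemma cb_interval:
  assumes "\<theta> \<in> ConBI n"
  shows "(a,b) \<in> \<theta> \<longleftrightarrow> (inf a b, sup a b) \<in> \<theta>"
proof
  assume ab: "(a,b) \<in> \<theta>"
  have "(inf a b, inf b b) \<in> \<theta>" using cb_inf[OF assms ab cb_refl[OF assms]] .
  moreover have "(sup b b, sup a b) \<in> \<theta>" using cb_sup[OF assms cb_sym[OF assms ab] cb_refl[OF assms]] .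
  ultimately show "(inf a b, sup a b) \<in> \<theta>" using cb_trans[OF assms] by simp
next
  assume h: "(inf a b, sup a b) \<in> \<theta>"
  have 1: "(inf a (inf a b), inf a (sup a b)) \<in> \<theta>" using cb_inf[OF assms cb_refl[OF assms] h] .
  have 2: "(inf b (inf a b), inf b (sup a b)) \<in> \<theta>" using cb_inf[OF assms cb_refl[OF assms] h] .
  have h1: "(inf a b, a) \<in> \<theta>" using 1 by (simp add: inf_absorb2 inf_absorb1)
  have h2: "(inf a b, b) \<in> \<theta>" using 2 by (simp add: inf_absorb2 inf_absorb1 inf_commute inf_left_commute)
  show "(a,b) \<in> \<theta>" using cb_trans[OF assms cb_sym[OF assms h1] h2] .
qed

lemma rtrancl_map:
  assumes "(a,b) \<in> R\<^sup>*" "\<And>x y. (x,y) \<in> R \<Longrightarrow> (f x, f y) \<in> R"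
  shows "(f a, f b) \<in> R\<^sup>*"
  using assms(1)
proof (induction rule: rtrancl_induct)
  case base then show ?case by simp
next
  case (step y z) then show ?case using assms(2) by (meson rtrancl_into_rtrancl)
qed

lemma Jn_ConBI:
  assumes t: "\<theta> \<in> ConBI n" and p: "\<phi> \<in> ConBI n"
  shows "Jn \<theta> \<phi> \<in> ConBI n"
proof -
  let ?R = "\<theta> \<union> \<phi>"
  have symR: "sym ?R" using t p by (auto simp: sym_def intro: cb_sym)
  have eq: "equiv UNIV (?R\<^sup>*)"
    unfolding equiv_def using symR by (auto simp: refl_on_def sym_rtrancl trans_rtrancl)
  have supl: "(sup a c, sup b c) \<in> ?R\<^sup>*" if "(a,b) \<in> ?R\<^sup>*" for a b c
    using rtrancl_map[OF that, of "\<lambda>x. sup x c"] t p cb_sup cb_refl by blast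
  have supr: "(sup c a, sup c b) \<in> ?R\<^sup>*" if "(a,b) \<in> ?R\<^sup>*" for a b c
    using rtrancl_map[OF that, of "\<lambda>x. sup c x"] t p cb_sup cb_refl by blast
  have infl: "(inf a c, inf b c) \<in> ?R\<^sup>*" if "(a,b) \<in> ?R\<^sup>*" for a b c
    using rtrancl_map[OF that, of "\<lambda>x. inf x c"] t p cb_inf cb_refl by blast
  have infr: "(inf c a, inf c b) \<in> ?R\<^sup>*" if "(a,b) \<in> ?R\<^sup>*" for a b c
    using rtrancl_map[OF that, of "\<lambda>x. inf c x"] t p cb_inf cb_refl by blast
  have nn: "(n a, n b) \<in> ?R\<^sup>*" if "(a,b) \<in> ?R\<^sup>*" for a b
    using rtrancl_map[OF that, of n] t p cb_n by blast
  have c1: "(sup a c, sup b d) \<in> ?R\<^sup>*" if "(a,b) \<in> ?R\<^sup>*" "(c,d) \<in> ?R\<^sup>*" for a b c d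
    using rtrancl_trans[OF supl[OF that(1)] supr[OF that(2)]] .
  have c2: "(inf a c, inf b d) \<in> ?R\<^sup>*" if "(a,b) \<in> ?R\<^sup>*" "(c,d) \<in> ?R\<^sup>*" for a b c d
    using rtrancl_trans[OF infl[OF that(1)] infr[OF that(2)]] .
  show ?thesis unfolding ConBI_def Jn_def mem_Collect_eq
    using eq c1 c2 nn by simp
qed

lemma Jn_least:
  assumes "\<chi> \<in> ConBI n" "\<theta> \<subseteq> \<chi>" "\<phi> \<subseteq> \<chi>"
  shows "Jn \<theta> \<phi> \<subseteq> \<chi>"
proof
  fix p assume "p \<in> Jn \<theta> \<phi>"
  then obtain a b where ab: "p = (a,b)" "(a,b) \<in> (\<theta> \<union> \<phi>)\<^sup>*" unfolding Jn_def by (cases p) auto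
  from ab(2) have "(a,b) \<in> \<chi>"
  proof (induction rule: rtrancl_induct)
    case base then show ?case using cb_refl[OF assms(1)] .
  next
    case (step y z)
    then have "(y,z) \<in> \<chi>" using assms(2,3) by blast
    then show ?case using cb_trans[OF assms(1) step(3)] by blast
  qed
  then show "p \<in> \<chi>" using ab by simp
qed

lemma Jn_lub:
  assumes "\<theta> \<in> ConBI n" "\<phi> \<in> ConBI n"
  shows "is_lub_in (ConBI n) \<theta> \<phi> (Jn \<theta> \<phi>)"
  unfolding is_lub_in_def using Jn_ConBI[OF assms] Jn_least
  by (auto simp: Jn_def)

lemma Int_ConBI:
  assumes "\<theta> \<in> ConBI n" "\<phi> \<in> ConBI n"
  shows "\<theta> \<inter> \<phi> \<in> ConBI n"
proof -
  have "refl_on UNIV (\<theta> \<inter> \<phi>)" using assms cb_refl by (auto simp: refl_on_def)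
  moreover have "sym (\<theta> \<inter> \<phi>)" unfolding sym_def using assms cb_sym by blast
  moreover have "trans (\<theta> \<inter> \<phi>)" unfolding trans_def using assms cb_trans by blast
  ultimately have "equiv UNIV (\<theta> \<inter> \<phi>)" by (simp add: equiv_def)
  moreover have "\<forall>a b c d. (a, b) \<in> \<theta> \<inter> \<phi> \<and> (c, d) \<in> \<theta> \<inter> \<phi> \<longrightarrow>
      (sup a c, sup b d) \<in> \<theta> \<inter> \<phi> \<and> (inf a c, inf b d) \<in> \<theta> \<inter> \<phi>"
    using assms cb_sup cb_inf by blast
  moreover have "\<forall>a b. (a, b) \<in> \<theta> \<inter> \<phi> \<longrightarrow> (n a, n b) \<in> \<theta> \<inter> \<phi>"
    using assms cb_n by blast
  ultimately show ?thesis unfolding ConBI_def by blast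
qed

lemma Int_glb:
  assumes "\<theta> \<in> ConBI n" "\<phi> \<in> ConBI n"
  shows "is_glb_in (ConBI n) \<theta> \<phi> (\<theta> \<inter> \<phi>)"
  unfolding is_glb_in_def using Int_ConBI[OF assms] by auto

lemma join_in_eq:
  assumes "\<theta> \<in> ConBI n" "\<phi> \<in> ConBI n"
  shows "join_in (ConBI n) \<theta> \<phi> = Jn \<theta> \<phi>"
  unfolding join_in_def
proof (rule the_equality)
  show "is_lub_in (ConBI n) \<theta> \<phi> (Jn \<theta> \<phi>)" by (rule Jn_lub[OF assms])
  fix z assume "is_lub_in (ConBI n) \<theta> \<phi> z"
  then show "z = Jn \<theta> \<phi>" using Jn_lub[OF assms] unfolding is_lub_in_def by (meson subset_antisym)
qed

lemma meet_in_eq: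
  assumes "\<theta> \<in> ConBI n" "\<phi> \<in> ConBI n"
  shows "meet_in (ConBI n) \<theta> \<phi> = \<theta> \<inter> \<phi>"
  unfolding meet_in_def
proof (rule the_equality)
  show "is_glb_in (ConBI n) \<theta> \<phi> (\<theta> \<inter> \<phi>)" by (rule Int_glb[OF assms])
  fix z assume "is_glb_in (ConBI n) \<theta> \<phi> z"
  then show "z = \<theta> \<inter> \<phi>" using Int_glb[OF assms] unfolding is_glb_in_def by (meson subset_antisym)
qed

lemma proj_lemma:
  assumes t: "\<theta> \<in> ConBI n" and p: "\<phi> \<in> ConBI n" and q: "\<psi> \<in> ConBI n"
    and ab: "(a,b) \<in> \<theta>" "a \<le> b" and az: "(a,z) \<in> (\<phi> \<union> \<psi>)\<^sup>*"
  shows "(a, inf (sup z a) b) \<in> ((\<theta> \<inter> \<phi>) \<union> (\<theta> \<inter> \<psi>))\<^sup>*"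
  using az
proof (induction rule: rtrancl_induct)
  case base then show ?case using ab by (simp add: inf_absorb1)
next
  case (step y z)
  have toa: "(inf (sup w a) b, a) \<in> \<theta>" for w
  proof -
    have "(inf (sup w a) b, inf (sup w a) a) \<in> \<theta>"
      using cb_inf[OF t cb_refl[OF t] cb_sym[OF t ab(1)]] .
    then show ?thesis by (simp add: inf_absorb2)
  qed
  have th: "(inf (sup y a) b, inf (sup z a) b) \<in> \<theta>"
    using cb_trans[OF t toa cb_sym[OF t toa]] .
  have "(inf (sup y a) b, inf (sup z a) b) \<in> \<phi>" if "(y,z) \<in> \<phi>"
    using cb_inf[OF p cb_sup[OF p that cb_refl[OF p]] cb_refl[OF p]] .
  moreover have "(inf (sup y a) b, inf (sup z a) b) \<in> \<psi>" if "(y,z) \<in> \<psi>"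
    using cb_inf[OF q cb_sup[OF q that cb_refl[OF q]] cb_refl[OF q]] .
  ultimately have "(inf (sup y a) b, inf (sup z a) b) \<in> (\<theta> \<inter> \<phi>) \<union> (\<theta> \<inter> \<psi>)"
    using step(2) th by blast
  then show ?case using step(3) by (meson rtrancl_into_rtrancl)
qed

lemma distrib_ConBI:
  assumes t: "\<theta> \<in> ConBI n" and p: "\<phi> \<in> ConBI n" and q: "\<psi> \<in> ConBI n"
  shows "\<theta> \<inter> Jn \<phi> \<psi> = Jn (\<theta> \<inter> \<phi>) (\<theta> \<inter> \<psi>)"
proof
  have tp: "\<theta> \<inter> \<phi> \<in> ConBI n" and tq: "\<theta> \<inter> \<psi> \<in> ConBI n" using Int_ConBI t p q by auto
  show "Jn (\<theta> \<inter> \<phi>) (\<theta> \<inter> \<psi>) \<subseteq> \<theta> \<inter> Jn \<phi> \<psi>"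
    by (rule Jn_least[OF Int_ConBI[OF t Jn_ConBI[OF p q]]]) (auto simp: Jn_def)
  show "\<theta> \<inter> Jn \<phi> \<psi> \<subseteq> Jn (\<theta> \<inter> \<phi>) (\<theta> \<inter> \<psi>)"
  proof
    fix r assume r: "r \<in> \<theta> \<inter> Jn \<phi> \<psi>"
    obtain a b where rab: "r = (a,b)" by (cases r)
    have tJ: "\<theta> \<inter> Jn \<phi> \<psi> \<in> ConBI n" using Int_ConBI[OF t Jn_ConBI[OF p q]] .
    have "(inf a b, sup a b) \<in> \<theta> \<inter> Jn \<phi> \<psi>" using iffD1[OF cb_interval[OF tJ] r[unfolded rab]] .
    then have m1: "(inf a b, sup a b) \<in> \<theta>" and m2: "(inf a b, sup a b) \<in> (\<phi> \<union> \<psi>)\<^sup>*"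
      by (auto simp: Jn_def)
    have le: "inf a b \<le> sup a b" by (rule le_supI1) simp
    have pr: "(inf a b, inf (sup (sup a b) (inf a b)) (sup a b)) \<in> ((\<theta> \<inter> \<phi>) \<union> (\<theta> \<inter> \<psi>))\<^sup>*"
      by (rule proj_lemma[OF t p q m1 le m2])
    have eq: "inf (sup (sup a b) (inf a b)) (sup a b) = sup a b"
      using le by (simp add: sup_absorb1)
    have "(inf a b, sup a b) \<in> ((\<theta> \<inter> \<phi>) \<union> (\<theta> \<inter> \<psi>))\<^sup>*"
      using pr eq by simp
    then have "(inf a b, sup a b) \<in> Jn (\<theta> \<inter> \<phi>) (\<theta> \<inter> \<psi>)" by (simp add: Jn_def)
    then have "(a, b) \<in> Jn (\<theta> \<inter> \<phi>) (\<theta> \<inter> \<psi>)" by (rule iffD2[OF cb_interval[OF Jn_ConBI[OF tp tq]]])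
    then show "r \<in> Jn (\<theta> \<inter> \<phi>) (\<theta> \<inter> \<psi>)" using rab by simp
  qed
qed

end
lemma modular_cancel:
  assumes m: "modular_lattice TYPE('a::lattice)"
    and "(u::'a) \<le> v" "inf u y = inf v y" "sup u y = sup v y"
  shows "u = v"
proof -
  have mod: "sup u (inf y v) = inf (sup u y) v"
    using m assms(2) unfolding modular_lattice_def by blast
  have "inf y v = inf u y" using assms(3) by (simp add: inf_commute)
  then have "sup u (inf y v) = u" by (simp add: sup_absorb1)
  moreover have "inf (sup u y) v = v" using assms(4) by (simp add: inf_absorb2)
  ultimately show ?thesis using mod by simp
qed

definition Sfree :: "('a::lattice \<times> 'a) set \<Rightarrow> ('a \<times> 'a) set" where
  "Sfree \<theta> = {(u,v). u \<le> v \<and> (\<forall>p q. u \<le> p \<and> p \<le> q \<and> q \<le> v \<and> (p,q) \<in> \<theta> \<longrightarrow> p = q)}"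

definition Psi :: "('a::lattice \<times> 'a) set \<Rightarrow> ('a \<times> 'a) set" where
  "Psi \<theta> = {(x,y). (inf x y, sup x y) \<in> Sfree \<theta>}"

context
  fixes n :: "'a::lattice \<Rightarrow> 'a" and \<theta> :: "('a \<times> 'a) set"
  assumes inv: "i_lattice_inv n" and m: "modular_lattice TYPE('a)" and t: "\<theta> \<in> ConBI n"
begin

lemma S_sub: "(u,v) \<in> Sfree \<theta> \<Longrightarrow> u \<le> u' \<Longrightarrow> u' \<le> v' \<Longrightarrow> v' \<le> v \<Longrightarrow> (u',v') \<in> Sfree \<theta>"
  unfolding Sfree_def by (auto intro: order_trans)

lemma S_D: "(u,v) \<in> Sfree \<theta> \<Longrightarrow> u \<le> p \<Longrightarrow> p \<le> q \<Longrightarrow> q \<le> v \<Longrightarrow> (p,q) \<in> \<theta> \<Longrightarrow> p = q"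
  unfolding Sfree_def by auto

lemma S_sup:
  assumes uv: "(u,v) \<in> Sfree \<theta>"
  shows "(sup u w, sup v w) \<in> Sfree \<theta>"
proof -
  have uv': "u \<le> v" using uv by (simp add: Sfree_def)
  have "p = q" if pq: "sup u w \<le> p" "p \<le> q" "q \<le> sup v w" "(p,q) \<in> \<theta>" for p q
  proof (rule modular_cancel[OF m \<open>p \<le> q\<close>])
    have "(inf p v, inf q v) \<in> \<theta>" using cb_inf[OF t pq(4) cb_refl[OF t]] .
    moreover have "u \<le> inf p v" using pq uv' by (meson le_inf_iff le_sup_iff order_trans)
    moreover have "inf p v \<le> inf q v" using inf_mono[OF pq(2) order_refl] .
    moreover have "inf q v \<le> v" by simp
    ultimately show "inf p v = inf q v" using S_D[OF uv] by blast
    have w: "w \<le> p" using pq by (meson le_sup_iff order_trans)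
    have "q \<le> sup p v" using pq(3) w by (meson le_sup_iff order_trans sup_ge1 sup_ge2 sup_least)
    then have "sup q v \<le> sup p v" by simp
    moreover have "sup p v \<le> sup q v" using pq by (simp add: le_supI1)
    ultimately show "sup p v = sup q v" by (rule antisym[rotated])
  qed
  moreover have "sup u w \<le> sup v w" using uv' by (simp add: le_supI1)
  ultimately show ?thesis unfolding Sfree_def by blast
qed

lemma S_inf:
  assumes uv: "(u,v) \<in> Sfree \<theta>"
  shows "(inf u w, inf v w) \<in> Sfree \<theta>"
proof -
  have uv': "u \<le> v" using uv by (simp add: Sfree_def)
  have "p = q" if pq: "inf u w \<le> p" "p \<le> q" "q \<le> inf v w" "(p,q) \<in> \<theta>" for p q
  proof (rule modular_cancel[OF m \<open>p \<le> q\<close>])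
    have "(sup p u, sup q u) \<in> \<theta>" using cb_sup[OF t pq(4) cb_refl[OF t]] .
    moreover have "u \<le> sup p u" by simp
    moreover have "sup p u \<le> sup q u" using sup_mono[OF pq(2) order_refl] .
    moreover have "sup q u \<le> v" using pq uv' by (meson le_inf_iff le_sup_iff order_trans)
    ultimately show "sup p u = sup q u" using S_D[OF uv] by blast
    have w: "q \<le> w" using pq by (meson le_inf_iff order_trans)
    have "inf q u \<le> inf u w" using w by (meson inf_le2 le_infI order_trans inf_le1)
    then have "inf q u \<le> p" using pq(1) by (rule order_trans)
    then have "inf q u \<le> inf p u" by simp
    moreover have "inf p u \<le> inf q u" using pq by (simp add: le_infI1)
    ultimately show "inf p u = inf q u" by (rule antisym[rotated])
  qed
  moreover have "inf u w \<le> inf v w" using uv' by (simp add: le_infI1)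
  ultimately show ?thesis unfolding Sfree_def by blast
qed

lemma S_comp:
  assumes uv: "(u,v) \<in> Sfree \<theta>" and vw: "(v,w) \<in> Sfree \<theta>"
  shows "(u,w) \<in> Sfree \<theta>"
proof -
  have uv': "u \<le> v" using uv by (simp add: Sfree_def)
  have vw': "v \<le> w" using vw by (simp add: Sfree_def)
  have "p = q" if pq: "u \<le> p" "p \<le> q" "q \<le> w" "(p,q) \<in> \<theta>" for p q
  proof (rule modular_cancel[OF m \<open>p \<le> q\<close>])
    have "(inf p v, inf q v) \<in> \<theta>" using cb_inf[OF t pq(4) cb_refl[OF t]] .
    moreover have "u \<le> inf p v" using pq uv' by simp
    moreover have "inf p v \<le> inf q v" using inf_mono[OF pq(2) order_refl] .
    moreover have "inf q v \<le> v" by simp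
    ultimately show "inf p v = inf q v" using S_D[OF uv] by blast
    have "(sup p v, sup q v) \<in> \<theta>" using cb_sup[OF t pq(4) cb_refl[OF t]] .
    moreover have "v \<le> sup p v" by simp
    moreover have "sup p v \<le> sup q v" using sup_mono[OF pq(2) order_refl] .
    moreover have "sup q v \<le> w" using pq vw' by simp
    ultimately show "sup p v = sup q v" using S_D[OF vw] by blast
  qed
  moreover have "u \<le> w" using uv' vw' by simp
  ultimately show ?thesis unfolding Sfree_def by blast
qed

lemma inv_n: "n (n a) = a" and anti_n: "a \<le> b \<Longrightarrow> n b \<le> n a"
  using inv unfolding i_lattice_inv_def by auto

lemma S_n:
  assumes uv: "(u,v) \<in> Sfree \<theta>"
  shows "(n v, n u) \<in> Sfree \<theta>"
proof -
  have uv': "u \<le> v" using uv by (simp add: Sfree_def)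
  have "p = q" if pq: "n v \<le> p" "p \<le> q" "q \<le> n u" "(p,q) \<in> \<theta>" for p q
  proof -
    have "u \<le> n q" using anti_n[OF pq(3)] inv_n by simp
    moreover have "n q \<le> n p" using anti_n[OF pq(2)] .
    moreover have "n p \<le> v" using anti_n[OF pq(1)] inv_n by simp
    moreover have "(n q, n p) \<in> \<theta>" using cb_sym[OF t cb_n[OF t pq(4)]] .
    ultimately have "n q = n p" using S_D[OF uv] by blast
    then have "n (n q) = n (n p)" by simp
    then show ?thesis using inv_n by simp
  qed
  moreover have "n v \<le> n u" using anti_n[OF uv'] .
  ultimately show ?thesis unfolding Sfree_def by blast
qed

lemma Psi_sup1:
  assumes "(x,y) \<in> Psi \<theta>"
  shows "(sup x c, sup y c) \<in> Psi \<theta>"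
proof -
  have "(sup (inf x y) c, sup (sup x y) c) \<in> Sfree \<theta>" using S_sup assms by (simp add: Psi_def)
  moreover have "sup (inf x y) c \<le> inf (sup x c) (sup y c)"
    by (simp add: le_supI1 le_infI1 sup.coboundedI1 inf.coboundedI1 inf.coboundedI2)
  moreover have "inf (sup x c) (sup y c) \<le> sup (sup x c) (sup y c)" by (rule order_trans[OF inf_le1 sup_ge1])
  moreover have "sup (sup x c) (sup y c) \<le> sup (sup x y) c" by (simp add: sup.coboundedI1 sup.coboundedI2 le_supI1 le_supI2)
  ultimately show ?thesis unfolding Psi_def using S_sub by blast
qed

lemma Psi_inf1:
  assumes "(x,y) \<in> Psi \<theta>"
  shows "(inf x c, inf y c) \<in> Psi \<theta>"
proof -
  have "(inf (inf x y) c, inf (sup x y) c) \<in> Sfree \<theta>" using S_inf assms by (simp add: Psi_def)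
  moreover have "inf (inf x y) c \<le> inf (inf x c) (inf y c)"
    by (simp add: inf.coboundedI1 inf.coboundedI2 le_infI1 le_infI2)
  moreover have "inf (inf x c) (inf y c) \<le> sup (inf x c) (inf y c)" by (rule order_trans[OF inf_le1 sup_ge1])
  moreover have "sup (inf x c) (inf y c) \<le> inf (sup x y) c" by (simp add: le_supI1 le_supI2 inf.coboundedI1 inf.coboundedI2)
  ultimately show ?thesis unfolding Psi_def using S_sub by blast
qed

lemma Psi_refl: "(x,x) \<in> Psi \<theta>"
  unfolding Psi_def Sfree_def by (auto intro: antisym)

lemma Psi_sym: "(x,y) \<in> Psi \<theta> \<Longrightarrow> (y,x) \<in> Psi \<theta>"
  unfolding Psi_def by (simp add: inf_commute sup_commute)

lemma Psi_trans:
  assumes xy: "(x,y) \<in> Psi \<theta>" and yz: "(y,z) \<in> Psi \<theta>"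
  shows "(x,z) \<in> Psi \<theta>"
proof -
  have xy': "(inf x y, sup x y) \<in> Sfree \<theta>" and yz': "(inf y z, sup y z) \<in> Sfree \<theta>"
    using xy yz by (auto simp: Psi_def)
  have A: "(inf (inf x y) z, inf y z) \<in> Sfree \<theta>"
    using S_inf[OF S_sub[OF xy', of "inf x y" y]] by (simp add: le_supI2)
  have B: "(inf y z, y) \<in> Sfree \<theta>" using S_sub[OF yz', of "inf y z" y] by simp
  have Cc: "(y, sup y z) \<in> Sfree \<theta>" using S_sub[OF yz', of y "sup y z"] by simp
  have D: "(sup y z, sup (sup x y) z) \<in> Sfree \<theta>"
    using S_sup[OF S_sub[OF xy', of y "sup x y"]] by (simp add: le_infI2)
  have all: "(inf (inf x y) z, sup (sup x y) z) \<in> Sfree \<theta>"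
    using S_comp[OF S_comp[OF S_comp[OF A B] Cc] D] .
  have "inf (inf x y) z \<le> inf x z" by (simp add: le_infI1)
  moreover have "inf x z \<le> sup x z" by (rule order_trans[OF inf_le1 sup_ge1])
  moreover have "sup x z \<le> sup (sup x y) z" by (simp add: le_supI1)
  ultimately have "(inf x z, sup x z) \<in> Sfree \<theta>" using S_sub[OF all] by blast
  then show ?thesis by (simp add: Psi_def)
qed

lemma Psi_n:
  assumes "(x,y) \<in> Psi \<theta>"
  shows "(n x, n y) \<in> Psi \<theta>"
proof -
  have "(n (sup x y), n (inf x y)) \<in> Sfree \<theta>" using S_n assms by (simp add: Psi_def)
  moreover have "n (sup x y) \<le> inf (n x) (n y)" by (rule le_infI[OF anti_n[OF sup_ge1] anti_n[OF sup_ge2]])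
  moreover have "inf (n x) (n y) \<le> sup (n x) (n y)" by (rule order_trans[OF inf_le1 sup_ge1])
  moreover have "sup (n x) (n y) \<le> n (inf x y)" by (rule le_supI[OF anti_n[OF inf_le1] anti_n[OF inf_le2]])
  ultimately show ?thesis unfolding Psi_def using S_sub by blast
qed

lemma Psi_ConBI: "Psi \<theta> \<in> ConBI n"
proof -
  have "refl_on UNIV (Psi \<theta>)" using Psi_refl by (auto simp: refl_on_def)
  moreover have "sym (Psi \<theta>)" using Psi_sym by (auto intro: symI)
  moreover have "trans (Psi \<theta>)" using Psi_trans by (auto intro: transI)
  ultimately have "equiv UNIV (Psi \<theta>)" by (simp add: equiv_def)
  moreover have "(sup a c, sup b d) \<in> Psi \<theta>" if "(a,b) \<in> Psi \<theta>" "(c,d) \<in> Psi \<theta>" for a b c d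
  proof -
    have "(sup a c, sup b c) \<in> Psi \<theta>" using Psi_sup1[OF that(1)] .
    moreover have "(sup c b, sup d b) \<in> Psi \<theta>" using Psi_sup1[OF that(2)] .
    ultimately show ?thesis using Psi_trans by (simp add: sup_commute)
  qed
  moreover have "(inf a c, inf b d) \<in> Psi \<theta>" if "(a,b) \<in> Psi \<theta>" "(c,d) \<in> Psi \<theta>" for a b c d
  proof -
    have "(inf a c, inf b c) \<in> Psi \<theta>" using Psi_inf1[OF that(1)] .
    moreover have "(inf c b, inf d b) \<in> Psi \<theta>" using Psi_inf1[OF that(2)] .
    ultimately show ?thesis using Psi_trans by (simp add: inf_commute)
  qed
  ultimately show ?thesis unfolding ConBI_def mem_Collect_eq using Psi_n by blast
qed

lemma Psi_meet: "\<theta> \<inter> Psi \<theta> = Id"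
proof
  show "Id \<subseteq> \<theta> \<inter> Psi \<theta>" using cb_refl[OF t] Psi_refl by auto
  show "\<theta> \<inter> Psi \<theta> \<subseteq> Id"
  proof
    fix r assume r: "r \<in> \<theta> \<inter> Psi \<theta>"
    obtain x y where rxy: "r = (x,y)" by (cases r)
    have rr: "(x,y) \<in> \<theta>" "(x,y) \<in> Psi \<theta>" using r rxy by auto
    have th: "(inf x y, sup x y) \<in> \<theta>" using iffD1[OF cb_interval[OF t] rr(1)] .
    have s: "(inf x y, sup x y) \<in> Sfree \<theta>" using rr(2) by (simp add: Psi_def)
    have le: "inf x y \<le> sup x y" by (rule order_trans[OF inf_le1 sup_ge1])
    have eq: "inf x y = sup x y" by (rule S_D[OF s order_refl le order_refl th])
    have "x \<le> y" using eq by (metis inf.cobounded2 sup.cobounded1 order_trans)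
    moreover have "y \<le> x" using eq by (metis inf.cobounded1 sup.cobounded2 order_trans)
    ultimately have "x = y" by (rule antisym)
    then show "r \<in> Id" using rxy by simp
  qed
qed

end
lemma Psi_join:
  fixes n :: "'a::{lattice,finite} \<Rightarrow> 'a"
  assumes inv: "i_lattice_inv n" and m: "modular_lattice TYPE('a)" and t: "\<theta> \<in> ConBI n"
  shows "Jn \<theta> (Psi \<theta>) = UNIV"
proof -
  define \<chi> where "\<chi> = Jn \<theta> (Psi \<theta>)"
  have chi: "\<chi> \<in> ConBI n" unfolding \<chi>_def by (rule Jn_ConBI[OF t Psi_ConBI[OF inv m t]])
  have tc: "\<theta> \<subseteq> \<chi>" and pc: "Psi \<theta> \<subseteq> \<chi>" unfolding \<chi>_def Jn_def by auto
  have key: "\<forall>x y. card {x..y} = k \<longrightarrow> x \<le> y \<longrightarrow> (x,y) \<in> \<chi>" for k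
  proof (induction k rule: less_induct)
    case (less k)
    show ?case
    proof (intro allI impI)
      fix x y :: 'a assume k: "card {x..y} = k" and xy: "x \<le> y"
      show "(x,y) \<in> \<chi>"
      proof (cases "(x,y) \<in> Sfree \<theta>")
        case True
        then have "(x,y) \<in> Psi \<theta>" using xy by (simp add: Psi_def inf_absorb1 sup_absorb2)
        then show ?thesis using pc by blast
      next
        case False
        then obtain p q where pq: "x \<le> p" "p \<le> q" "q \<le> y" "(p,q) \<in> \<theta>" "p \<noteq> q"
          using xy unfolding Sfree_def by auto
        have "{x..p} \<subset> {x..y}"
        proof
          show "{x..p} \<subseteq> {x..y}" using pq by auto
          have "q \<notin> {x..p}" using pq by (auto dest: antisym)
          moreover have "q \<in> {x..y}" using pq by auto
          ultimately show "{x..p} \<noteq> {x..y}" by blast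
        qed
        then have c1: "card {x..p} < k" using psubset_card_mono[OF finite] k by metis
        have "{q..y} \<subset> {x..y}"
        proof
          show "{q..y} \<subseteq> {x..y}" using pq by auto
          have "p \<notin> {q..y}" using pq by (auto dest: antisym)
          moreover have "p \<in> {x..y}" using pq by auto
          ultimately show "{q..y} \<noteq> {x..y}" by blast
        qed
        then have c2: "card {q..y} < k" using psubset_card_mono[OF finite] k by metis
        have "(x,p) \<in> \<chi>" using less c1 pq by blast
        moreover have "(q,y) \<in> \<chi>" using less c2 pq by blast
        moreover have "(p,q) \<in> \<chi>" using pq tc by blast
        ultimately show ?thesis using cb_trans[OF chi] by blast
      qed
    qed
  qed
  have "(x,y) \<in> \<chi>" for x y
  proof -
    have "inf x y \<le> sup x y" by (rule order_trans[OF inf_le1 sup_ge1])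
    then have "(inf x y, sup x y) \<in> \<chi>" using key by blast
    then show ?thesis by (rule iffD2[OF cb_interval[OF chi]])
  qed
  then show ?thesis unfolding \<chi>_def by auto
qed

lemma Id_ConBI: "Id \<in> ConBI n"
  unfolding ConBI_def by (auto simp: equiv_def refl_on_def sym_def trans_def)

lemma UNIV_ConBI: "UNIV \<in> ConBI n"
  unfolding ConBI_def by (auto simp: equiv_def refl_on_def sym_def trans_def)

theorem corollary4p9:
  fixes n :: "'a::{lattice, finite} \<Rightarrow> 'a"
  assumes "i_lattice_inv n"
    and "modular_lattice TYPE('a)"
  shows "boolean_lattice_on (ConBI n) \<and> (\<exists>k::nat. card (ConBI n) = 2 ^ k)"
proof -
  note inv = assms(1) and m = assms(2)
  have compl: "\<forall>x\<in>ConBI n. \<exists>y\<in>ConBI n. x \<inter> y = Id \<and> Jn x y = UNIV"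
  proof
    fix x assume x: "x \<in> ConBI n"
    show "\<exists>y\<in>ConBI n. x \<inter> y = Id \<and> Jn x y = UNIV"
      using Psi_ConBI[OF inv m x] Psi_meet[OF inv m x] Psi_join[OF inv m x] by blast
  qed
  have dist: "\<forall>x\<in>ConBI n. \<forall>y\<in>ConBI n. \<forall>z\<in>ConBI n. x \<inter> Jn y z = Jn (x \<inter> y) (x \<inter> z)"
    using distrib_ConBI by blast
  have lub: "\<forall>x\<in>ConBI n. \<forall>y\<in>ConBI n. Jn x y \<in> ConBI n \<and> x \<subseteq> Jn x y \<and> y \<subseteq> Jn x y \<and>
      (\<forall>z\<in>ConBI n. x \<subseteq> z \<and> y \<subseteq> z \<longrightarrow> Jn x y \<subseteq> z)"
    using Jn_lub unfolding is_lub_in_def by blast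
  have bnd: "\<forall>x\<in>ConBI n. Id \<subseteq> x \<and> x \<subseteq> UNIV" using cb_refl by auto
  have ints: "\<forall>x\<in>ConBI n. \<forall>y\<in>ConBI n. x \<inter> y \<in> ConBI n" using Int_ConBI by blast
  have fin: "finite (ConBI n)" by simp
  have B: "boolean_lattice_on (ConBI n)"
    unfolding boolean_lattice_on_def
  proof (intro conjI)
    show "\<forall>x\<in>ConBI n. \<forall>y\<in>ConBI n. (\<exists>z. is_lub_in (ConBI n) x y z) \<and> (\<exists>z. is_glb_in (ConBI n) x y z)"
      using Jn_lub Int_glb by blast
    show "\<exists>bot\<in>ConBI n. \<exists>top\<in>ConBI n. (\<forall>x\<in>ConBI n. bot \<subseteq> x \<and> x \<subseteq> top) \<and>
        (\<forall>x\<in>ConBI n. \<exists>y\<in>ConBI n. meet_in (ConBI n) x y = bot \<and> join_in (ConBI n) x y = top)"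
    proof (intro bexI conjI)
      show "\<forall>x\<in>ConBI n. Id \<subseteq> x \<and> x \<subseteq> UNIV" by (rule bnd)
      show "\<forall>x\<in>ConBI n. \<exists>y\<in>ConBI n. meet_in (ConBI n) x y = Id \<and> join_in (ConBI n) x y = UNIV"
      proof
        fix x assume x: "x \<in> ConBI n"
        have P: "Psi x \<in> ConBI n" by (rule Psi_ConBI[OF inv m x])
        have "meet_in (ConBI n) x (Psi x) = Id" using meet_in_eq[OF x P] Psi_meet[OF inv m x] by simp
        moreover have "join_in (ConBI n) x (Psi x) = UNIV" using join_in_eq[OF x P] Psi_join[OF inv m x] by simp
        ultimately show "\<exists>y\<in>ConBI n. meet_in (ConBI n) x y = Id \<and> join_in (ConBI n) x y = UNIV"
          using P by blast
      qed
    qed (simp_all add: Id_ConBI UNIV_ConBI)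
    show "\<forall>x\<in>ConBI n. \<forall>y\<in>ConBI n. \<forall>z\<in>ConBI n. meet_in (ConBI n) x (join_in (ConBI n) y z) =
        join_in (ConBI n) (meet_in (ConBI n) x y) (meet_in (ConBI n) x z)"
    proof (intro ballI)
      fix x y z assume xyz: "x \<in> ConBI n" "y \<in> ConBI n" "z \<in> ConBI n"
      have "meet_in (ConBI n) x (join_in (ConBI n) y z) = x \<inter> Jn y z"
        using join_in_eq[OF xyz(2,3)] meet_in_eq[OF xyz(1) Jn_ConBI[OF xyz(2,3)]] by simp
      also have "\<dots> = Jn (x \<inter> y) (x \<inter> z)" using dist xyz by blast
      also have "\<dots> = join_in (ConBI n) (meet_in (ConBI n) x y) (meet_in (ConBI n) x z)"
        using meet_in_eq[OF xyz(1,2)] meet_in_eq[OF xyz(1,3)]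
          join_in_eq[OF Int_ConBI[OF xyz(1,2)] Int_ConBI[OF xyz(1,3)]] by simp
      finally show "meet_in (ConBI n) x (join_in (ConBI n) y z) =
        join_in (ConBI n) (meet_in (ConBI n) x y) (meet_in (ConBI n) x z)" .
    qed
  qed
  have "\<exists>k. card (ConBI n) = 2 ^ k"
    by (rule boolean_card[OF fin Id_ConBI UNIV_ConBI bnd ints lub dist compl])
  with B show ?thesis by blast
qed

end
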